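(* In the setting described in the context, assume $t$ is prime, and let $O_{i_1},\dots,O_{i_{s(p,t)}}$ be representatives of the orbits of the action of $\langle\tau\rangle$ on $\{O_1,\dots,O_{t-1}\}$ (where $\tau(O_i)=O_{pi\bmod t}$). Then $$w_0+\frac{t-1}{s(p,t)}\sum_{j=1}^{s(p,t)}w_{i_j}=q+1,\qquad w_0^2+\frac{t-1}{s(p,t)}\sum_{j=1}^{s(p,t)}w_{i_j}^2=\frac{q^2+(t+1)q+1}{t}.$$
   Context: Let $q=p^h$ with $p$ prime, $h\ge1$. Let $\alpha$ be a primitive element of $\mathbb{F}_{q^3}$; the points of $PG(2,q)$ are the 1-dimensional $\mathbb{F}_q$-subspaces of $\mathbb{F}_{q^3}$, and $P_i$ denotes the point represented by $\alpha^i$, so $PG(2,q)=\{P_0,\dots,P_{q^2+q}\}$. Let $\tau:P_i\mapsto P_{ip\bmod(q^2+q+1)}$ (a collineation) and let $\ell_0$ be a line of $PG(2,q)$ fixed by $\tau$. Let $t$ be a positive divisor of $q^2+q+1$ and for $i=0,\dots,t-1$ let $O_i=\{P_u:u\equiv i\pmod t\}$. For $u=0,\dots,t-1$ let $w_u=|\ell_0\cap O_u|$. Let $s(p,t)$ be the number of orbits on $\mathbb{Z}_t\setminus\{0\}$ of the group generated by $i\mapsto p\cdot i\pmod t$. *)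

theory Defs
  imports Complex_Main "HOL-Computational_Algebra.Primes"
begin

text \<open>Model of F_{q^3}: a finite field type 'a with CARD('a) = q^3.
  The subfield F_q is {c. c^q = c}.\<close>

definition Fq :: "nat \<Rightarrow> 'a::{field,finite} set" where
  "Fq q = {c. c ^ q = c}"

definition primitive_elem :: "'a::{field,finite} \<Rightarrow> bool" where
  "primitive_elem \<alpha> \<longleftrightarrow> (\<forall>x. x \<noteq> 0 \<longrightarrow> (\<exists>i::nat. x = \<alpha> ^ i))"

text \<open>The point P_i: the 1-dimensional F_q-subspace spanned by alpha^i.\<close>
definition pg_point :: "nat \<Rightarrow> 'a::{field,finite} \<Rightarrow> nat \<Rightarrow> 'a set" where
  "pg_point q \<alpha> i = {c * \<alpha> ^ i | c. c \<in> Fq q}"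

definition Fq_subspace :: "nat \<Rightarrow> 'a::{field,finite} set \<Rightarrow> bool" where
  "Fq_subspace q L \<longleftrightarrow> 0 \<in> L \<and> (\<forall>x\<in>L. \<forall>y\<in>L. x + y \<in> L)
     \<and> (\<forall>c\<in>Fq q. \<forall>x\<in>L. c * x \<in> L)"

text \<open>A line of PG(2,q): a 2-dimensional F_q-subspace of F_{q^3} (q^2 elements).\<close>
definition pg_line :: "nat \<Rightarrow> 'a::{field,finite} set \<Rightarrow> bool" where
  "pg_line q L \<longleftrightarrow> Fq_subspace q L \<and> card L = q ^ 2"

definition line_points :: "nat \<Rightarrow> 'a::{field,finite} \<Rightarrow> 'a set \<Rightarrow> 'a set set" where
  "line_points q \<alpha> L = {pg_point q \<alpha> i | i. i < q^2 + q + 1 \<and> pg_point q \<alpha> i \<subseteq> L}"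

definition orbit_O :: "nat \<Rightarrow> 'a::{field,finite} \<Rightarrow> nat \<Rightarrow> nat \<Rightarrow> 'a set set" where
  "orbit_O q \<alpha> t u = {pg_point q \<alpha> i | i. i < q^2 + q + 1 \<and> i mod t = u}"

text \<open>tau fixes L: tau(P_i) = P_{ip mod (q^2+q+1)} lies on L iff P_i does.\<close>
definition tau_fixed :: "nat \<Rightarrow> nat \<Rightarrow> 'a::{field,finite} \<Rightarrow> 'a set \<Rightarrow> bool" where
  "tau_fixed p q \<alpha> L \<longleftrightarrow> (\<forall>i < q^2 + q + 1.
     pg_point q \<alpha> i \<subseteq> L \<longleftrightarrow> pg_point q \<alpha> ((i * p) mod (q^2 + q + 1)) \<subseteq> L)"

definition mult_orbit :: "nat \<Rightarrow> nat \<Rightarrow> nat \<Rightarrow> nat set" where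
  "mult_orbit p t i = {(p ^ k * i) mod t | k. True}"

definition s_pt :: "nat \<Rightarrow> nat \<Rightarrow> nat" where
  "s_pt p t = card (mult_orbit p t ` {1..<t})"

end

theory Submission
  imports Defs "HOL-Number_Theory.Number_Theory"
begin



lemma finite_add_closed_neg:
  fixes L :: "'a::ab_group_add set"
  assumes "finite L" "0 \<in> L" "\<forall>x\<in>L. \<forall>y\<in>L. x + y \<in> L" "x \<in> L"
  shows "-x \<in> L"
proof -
  have "(\<lambda>y. x + y) ` L \<subseteq> L" using assms by auto
  moreover have "inj_on (\<lambda>y. x + y) L" by (auto simp: inj_on_def)
  ultimately have "(\<lambda>y. x + y) ` L = L" using assms(1) endo_inj_surj by blast
  then have "0 \<in> (\<lambda>y. x+y) ` L" using assms(2) by simp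
  then obtain y where "y \<in> L" "x + y = 0" by auto
  then have "-x = y" by (simp add: add_eq_0_iff2 minus_unique)
  then show ?thesis using \<open>y \<in> L\<close> by simp
qed

lemma card_inter_bound:
  fixes L M :: "'a::{ab_group_add,finite} set"
  assumes "\<forall>x\<in>L. \<forall>y\<in>L. x - y \<in> L" "\<forall>x\<in>M. \<forall>y\<in>M. x - y \<in> M"
  shows "card L * card M \<le> card (L \<inter> M) * card (UNIV::'a set)"
proof -
  define F where "F s = {(a,b). a \<in> L \<and> b \<in> M \<and> a + b = s}" for s
  have "L \<times> M = (\<Union>s\<in>UNIV. F s)" by (auto simp: F_def)
  hence "card (L \<times> M) \<le> (\<Sum>s\<in>UNIV. card (F s))" using card_UN_le[of UNIV F] by simp
  also have "\<dots> \<le> (\<Sum>s\<in>(UNIV::'a set). card (L \<inter> M))"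
  proof (rule sum_mono)
    fix s
    show "card (F s) \<le> card (L \<inter> M)"
    proof (cases "F s = {}")
      case True thus ?thesis by simp
    next
      case False
      then obtain a0 b0 where ab0: "(a0,b0) \<in> F s" by auto
      have "inj_on (\<lambda>(a,b). a - a0) (F s)" by (auto simp: inj_on_def F_def)
      moreover have "(\<lambda>(a,b). a - a0) ` F s \<subseteq> L \<inter> M"
      proof
        fix z assume "z \<in> (\<lambda>(a,b). a - a0) ` F s"
        then obtain a b where ab: "(a,b) \<in> F s" "z = a - a0" by auto
        have "z = b0 - b" using ab ab0 by (auto simp: F_def algebra_simps)
        have "z \<in> L" using ab ab0 assms(1) by (auto simp: F_def)
        moreover have "z \<in> M" using \<open>z = b0 - b\<close> ab ab0 assms(2) by (auto simp: F_def)
        ultimately show "z \<in> L \<inter> M" by simp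
      qed
      ultimately show ?thesis by (metis card_image card_mono finite)
    qed
  qed
  also have "\<dots> = card (L \<inter> M) * card (UNIV::'a set)" by simp
  finally show ?thesis by (simp add: card_cartesian_product)
qed

lemma all_eq_from_sum:
  fixes f :: "'b \<Rightarrow> nat"
  assumes "finite S" "\<forall>x\<in>S. c \<le> f x" "sum f S \<le> card S * c" "x \<in> S"
  shows "f x = c"
proof (rule ccontr)
  assume "f x \<noteq> c"
  hence "c < f x" using assms by force
  hence "sum (\<lambda>_. c) S < sum f S" using sum_strict_mono_ex1[of S "\<lambda>_. c" f] assms by auto
  thus False using assms by simp
qed

lemma mod_count:
  assumes "A \<subseteq> {..<n}"
  shows "card {k. k < c*n \<and> k mod n \<in> A} = c * card A"
proof -
  have fin: "finite A" using assms finite_subset by blast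
  have n0: "A \<noteq> {} \<Longrightarrow> n > 0" using assms by auto
  have "{k. k < c*n \<and> k mod n \<in> A} = (\<lambda>(a,j). j*n+a) ` (A \<times> {..<c})"
  proof (cases "A = {}")
    case True thus ?thesis by auto
  next
    case False
    hence np: "n > 0" using n0 by auto
    show ?thesis
    proof (rule equalityI; rule subsetI)
      fix k assume k: "k \<in> {k. k < c*n \<and> k mod n \<in> A}"
      have "k div n < c" using k np by (simp add: div_less_iff_less_mult mult.commute)
      moreover have "k = (k div n)*n + k mod n" by simp
      ultimately show "k \<in> (\<lambda>(a,j). j*n+a) ` (A \<times> {..<c})" using k
        by (intro image_eqI[where x="(k mod n, k div n)"]) auto
    next
      fix k assume "k \<in> (\<lambda>(a,j). j*n+a) ` (A \<times> {..<c})"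
      then obtain a j where aj: "a \<in> A" "j < c" "k = j*n+a" by auto
      have "a < n" using aj assms by auto
      have "j*n + a < j*n + n" using \<open>a < n\<close> by simp
      also have "\<dots> = (Suc j)*n" by simp
      also have "\<dots> \<le> c*n" using aj by (intro mult_le_mono1) simp
      finally have "k < c*n" using aj by simp
      moreover have "k mod n = a" using aj \<open>a < n\<close> by simp
      ultimately show "k \<in> {k. k < c*n \<and> k mod n \<in> A}" using aj by auto
    qed
  qed
  moreover have "inj_on (\<lambda>(a,j). j*n+a) (A \<times> {..<c})"
  proof (rule inj_onI, clarsimp)
    fix a j a' j' assume "a \<in> A" "a' \<in> A" "j*n+a = j'*n+a'"
    moreover hence "a < n" "a' < n" using assms by auto
    ultimately have e: "j*n+a = j'*n+a'" and an: "a < n" "a' < n" by auto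
    have "(j*n+a) mod n = a" "(j'*n+a') mod n = a'" using an by simp_all
    hence "a = a'" using e by simp
    moreover hence "j*n = j'*n" using e by simp
    hence "j = j'" using an by simp
    ultimately show "a = a' \<and> j = j'" by simp
  qed
  ultimately show ?thesis using fin by (simp add: card_image card_cartesian_product)
qed




lemma diff_sum:
  fixes E S :: "nat set" and m :: nat
  assumes E: "E \<subseteq> {..<m}" and S: "S \<subseteq> {..<m}"
  shows "(\<Sum>d\<in>S. card {y\<in>E. (y+d) mod m \<in> E}) = card {(x,y). x\<in>E \<and> y\<in>E \<and> (x+m-y) mod m \<in> S}"
proof -
  have finE: "finite E" using finite_subset[OF E] by simp
  have finS: "finite S" using finite_subset[OF S] by simp
  have "(\<Sum>d\<in>S. card {y\<in>E. (y+d) mod m \<in> E}) = card (SIGMA d:S. {y\<in>E. (y+d) mod m \<in> E})"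
    using finS finE by (simp add: card_SigmaI)
  also have "\<dots> = card ((\<lambda>(d,y). ((y+d) mod m, y)) ` (SIGMA d:S. {y\<in>E. (y+d) mod m \<in> E}))"
  proof (rule card_image[symmetric], rule inj_onI, clarsimp)
    fix d y d' assume "d \<in> S" "d' \<in> S" "y \<in> E" "(y + d) mod m = (y + d') mod m"
    moreover have "d < m" "d' < m" using \<open>d \<in> S\<close> \<open>d' \<in> S\<close> S by auto
    ultimately have "[y + d = y + d'] (mod m)" unfolding cong_def by simp
    hence "[d = d'] (mod m)" by (simp add: cong_add_lcancel_nat)
    thus "d = d'" using \<open>d < m\<close> \<open>d' < m\<close> by (simp add: cong_def)
  qed
  also have "(\<lambda>(d,y). ((y+d) mod m, y)) ` (SIGMA d:S. {y\<in>E. (y+d) mod m \<in> E}) = {(x,y). x\<in>E \<and> y\<in>E \<and> (x+m-y) mod m \<in> S}"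
  proof (rule equalityI; rule subsetI)
    fix z assume "z \<in> (\<lambda>(d,y). ((y+d) mod m, y)) ` (SIGMA d:S. {y\<in>E. (y+d) mod m \<in> E})"
    then obtain d y where dy: "d \<in> S" "y \<in> E" "(y+d) mod m \<in> E" "z = ((y+d) mod m, y)" by auto
    have dm: "d < m" "y < m" using dy S E by auto
    have "((y+d) mod m + m - y) mod m = d"
    proof -
      have A: "[(y+d) mod m + m = d + y] (mod m)" by (simp add: cong_def add.commute)
      have "(y+d) mod m + m - y + y = (y+d) mod m + m" using dm by simp
      hence "[(y+d) mod m + m - y + y = d + y] (mod m)" using A by simp
      hence "[(y+d) mod m + m - y = d] (mod m)" by (simp add: cong_add_rcancel_nat)
      thus ?thesis using dm by (simp add: cong_def)
    qed
    thus "z \<in> {(x,y). x\<in>E \<and> y\<in>E \<and> (x+m-y) mod m \<in> S}" using dy by auto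
  next
    fix z assume "z \<in> {(x,y). x\<in>E \<and> y\<in>E \<and> (x+m-y) mod m \<in> S}"
    then obtain x y where xy: "x \<in> E" "y \<in> E" "(x+m-y) mod m \<in> S" "z = (x,y)" by auto
    have dm: "x < m" "y < m" using xy E by auto
    have "(y + (x+m-y) mod m) mod m = x"
    proof -
      have "(y + (x+m-y) mod m) mod m = (y + (x+m-y)) mod m" by (simp add: mod_add_right_eq)
      also have "y + (x+m-y) = x + m" using dm by simp
      finally show ?thesis using dm by simp
    qed
    thus "z \<in> (\<lambda>(d,y). ((y+d) mod m, y)) ` (SIGMA d:S. {y\<in>E. (y+d) mod m \<in> E})"
      using xy by (intro image_eqI[where x="((x+m-y) mod m, y)"]) auto
  qed
  finally show ?thesis .
qed

lemma pair_sq: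
  fixes f :: "'b \<Rightarrow> nat"
  assumes "finite E" "finite U" "f ` E \<subseteq> U"
  shows "card {(x,y). x\<in>E \<and> y\<in>E \<and> f x = f y} = (\<Sum>u\<in>U. card {x\<in>E. f x = u}^2)"
proof -
  have "{(x,y). x\<in>E \<and> y\<in>E \<and> f x = f y} = (\<Union>u\<in>U. {x\<in>E. f x = u} \<times> {x\<in>E. f x = u})"
    using assms(3) by auto
  moreover have "card (\<Union>u\<in>U. {x\<in>E. f x = u} \<times> {x\<in>E. f x = u}) = (\<Sum>u\<in>U. card ({x\<in>E. f x = u} \<times> {x\<in>E. f x = u}))"
    by (rule card_UN_disjoint) (use assms in auto)
  ultimately show ?thesis by (simp add: card_cartesian_product power2_eq_square)
qed

lemma card_multiples:
  assumes "k > 0"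
  shows "card {d. d < c*k \<and> k dvd d} = c"
proof -
  have "{d. d < c*k \<and> k dvd d} = (\<lambda>j. k*j) ` {..<c}"
    using assms by (auto elim!: dvdE simp: mult.commute)
  moreover have "inj_on (\<lambda>j. k*j) {..<c}" using assms by (auto simp: inj_on_def)
  ultimately show ?thesis by (simp add: card_image)
qed




lemma field_fermat:
  fixes x :: "'a::{field,finite}"
  assumes "x \<noteq> 0"
  shows "x ^ (card (UNIV::'a set) - 1) = 1"
proof -
  let ?U = "UNIV - {0::'a}"
  have cU: "card ?U = card (UNIV::'a set) - 1" by (simp add: card_Diff_singleton)
  have inj: "inj_on (\<lambda>y. x*y) ?U" using assms by (auto simp: inj_on_def)
  have img: "(\<lambda>y. x*y) ` ?U = ?U" using assms inj by (intro endo_inj_surj) auto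
  have "prod id ?U = prod id ((\<lambda>y. x*y) ` ?U)" using img by simp
  also have "\<dots> = prod (\<lambda>y. x*y) ?U" using inj by (simp add: prod.reindex)
  also have "\<dots> = x^card ?U * prod id ?U" by (simp add: prod.distrib)
  finally have "1 * prod id ?U = x^card ?U * prod id ?U" by simp
  moreover have "prod id ?U \<noteq> 0" by simp
  ultimately have "x^card ?U = 1" using mult_right_cancel[of "prod id ?U" 1 "x^card ?U"] by simp
  thus ?thesis using cU by simp
qed

locale singer =
  fixes \<alpha> :: "'a::{field,finite}" and q :: nat
  assumes q2: "q \<ge> 2" and card: "card (UNIV::'a set) = q^3" and prim: "primitive_elem \<alpha>"
begin

abbreviation "mm \<equiv> q^3 - 1"
abbreviation "nn \<equiv> q^2 + q + 1"

lemma mm_eq: "mm = (q-1)*nn"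
proof -
  obtain k where "q = Suc k" using q2 by (cases q) auto
  thus ?thesis by (simp add: power2_eq_square power3_eq_cube algebra_simps)
qed

lemma mm_pos: "mm > 0" using mm_eq q2 by simp

lemma nn_le_mm: "nn \<le> mm"
proof -
  have "1*nn \<le> (q-1)*nn" using q2 by (intro mult_le_mono1) simp
  thus ?thesis unfolding mm_eq by simp
qed

lemma alpha_nz: "\<alpha> \<noteq> 0"
proof
  assume a0: "\<alpha> = 0"
  have "UNIV \<subseteq> {0, 1::'a}"
  proof
    fix x :: 'a
    show "x \<in> {0,1}"
    proof (cases "x = 0")
      case False
      then obtain i where "x = \<alpha>^i" using prim unfolding primitive_elem_def by blast
      thus ?thesis using a0 by (cases i) auto
    qed simp
  qed
  hence "card (UNIV::'a set) \<le> card {0,1::'a}" by (intro card_mono) auto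
  hence "card (UNIV::'a set) \<le> 2" by simp
  moreover have "q^3 \<ge> 2^3" using q2 by (intro power_mono) auto
  ultimately show False using card by simp
qed

lemma alpha_m: "\<alpha>^mm = 1"
  using field_fermat[OF alpha_nz] card by simp

lemma alpha_pow_mod: "\<alpha>^a = \<alpha>^(a mod mm)"
proof -
  have "\<alpha>^a = \<alpha>^(mm*(a div mm) + a mod mm)" by (simp only: mult_div_mod_eq)
  also have "\<dots> = \<alpha>^(a mod mm)" by (simp only: power_add power_mult alpha_m power_one mult_1)
  finally show ?thesis .
qed

lemma alpha_surj: "x \<noteq> 0 \<Longrightarrow> \<exists>k<mm. \<alpha>^k = x"
proof -
  assume "x \<noteq> 0"
  then obtain i where "x = \<alpha>^i" using prim unfolding primitive_elem_def by blast
  thus ?thesis using alpha_pow_mod[of i] mm_pos by (intro exI[where x="i mod mm"]) auto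
qed

lemma alpha_img: "(\<lambda>k. \<alpha>^k) ` {..<mm} = UNIV - {0}"
  using alpha_surj alpha_nz by auto

lemma alpha_inj: "inj_on (\<lambda>k. \<alpha>^k) {..<mm}"
proof (rule eq_card_imp_inj_on)
  show "card ((\<lambda>k. \<alpha>^k) ` {..<mm}) = card {..<mm}"
    using alpha_img card by (simp add: card_Diff_singleton)
qed simp

lemma alpha_eq: "\<alpha>^a = \<alpha>^b \<longleftrightarrow> a mod mm = b mod mm"
proof
  assume "\<alpha>^a = \<alpha>^b"
  hence "\<alpha>^(a mod mm) = \<alpha>^(b mod mm)" using alpha_pow_mod[of a] alpha_pow_mod[of b] by simp
  thus "a mod mm = b mod mm" using alpha_inj mm_pos by (auto simp: inj_on_def)
next
  assume "a mod mm = b mod mm" thus "\<alpha>^a = \<alpha>^b" using alpha_pow_mod[of a] alpha_pow_mod[of b] by simp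
qed

lemma Fq_alpha: "\<alpha>^a \<in> Fq q \<longleftrightarrow> nn dvd a"
proof -
  have "\<alpha>^a \<in> Fq q \<longleftrightarrow> \<alpha>^(a*q) = \<alpha>^a" by (simp add: Fq_def power_mult[symmetric] mult.commute)
  also have "\<dots> \<longleftrightarrow> (a*q) mod mm = a mod mm" by (rule alpha_eq)
  also have "\<dots> \<longleftrightarrow> mm dvd a*q - a" using q2 by (intro mod_eq_dvd_iff_nat) simp
  also have "a*q - a = (q-1)*a" by (simp add: algebra_simps diff_mult_distrib2)
  also have "mm dvd (q-1)*a \<longleftrightarrow> nn dvd a"
  proof -
    have "q-1 \<noteq> 0" using q2 by simp
    have h: "((q-1)*nn dvd (q-1)*a) = (q-1 = 0 \<or> nn dvd a)" by (rule nat_mult_dvd_cancel_disj)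
    show ?thesis unfolding mm_eq h using \<open>q-1 \<noteq> 0\<close> by simp
  qed
  finally show ?thesis .
qed

lemma one_Fq: "1 \<in> Fq q" by (simp add: Fq_def)

end




lemma card_bij_img: assumes "f ` A = B" "inj_on f A" shows "card A = card B"
  using card_image[OF assms(2)] assms(1) by simp

lemma arith1:
  fixes n j c q a :: nat
  assumes "q \<ge> 2" "a = n*j + c"
  shows "a + n*((q-2)*j) = c + ((q-1)*n)*j"
proof -
  have "q - 1 = 1 + (q-2)" using assms by simp
  thus ?thesis using assms(2) by (simp add: algebra_simps)
qed

locale singer_line = singer \<alpha> q for \<alpha> :: "'a::{field,finite}" and q +
  fixes L :: "'a::{field,finite} set"
  assumes line: "pg_line q L"
begin

lemma finL: "finite L" by simp
lemma L0: "0 \<in> L" using line by (simp add: pg_line_def Fq_subspace_def)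
lemma L_add: "x \<in> L \<Longrightarrow> y \<in> L \<Longrightarrow> x + y \<in> L" using line by (simp add: pg_line_def Fq_subspace_def)
lemma L_scale: "c \<in> Fq q \<Longrightarrow> x \<in> L \<Longrightarrow> c * x \<in> L" using line by (simp add: pg_line_def Fq_subspace_def)
lemma card_L: "card L = q^2" using line by (simp add: pg_line_def)
lemma L_neg: "x \<in> L \<Longrightarrow> -x \<in> L" using finite_add_closed_neg[OF finL L0] L_add by blast
lemma L_sub: "x \<in> L \<Longrightarrow> y \<in> L \<Longrightarrow> x - y \<in> L" using L_add L_neg by (metis diff_conv_add_uminus)

lemma L_shift: "\<alpha>^a \<in> L \<Longrightarrow> \<alpha>^(a + nn*k) \<in> L"
proof -
  assume h: "\<alpha>^a \<in> L"
  have "\<alpha>^(nn*k) \<in> Fq q" unfolding Fq_alpha by (rule dvd_triv_left)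
  hence "\<alpha>^(nn*k) * \<alpha>^a \<in> L" using h by (rule L_scale)
  thus ?thesis by (simp add: power_add mult.commute)
qed

lemma L_alpha_mod: assumes "\<alpha>^a \<in> L" "a mod nn = b mod nn" shows "\<alpha>^b \<in> L"
proof -
  define c where "c = a mod nn"
  define j where "j = a div nn"
  have "\<alpha>^(a + nn*((q-2)*j)) \<in> L" using assms(1) by (rule L_shift)
  moreover have "a + nn*((q-2)*j) = c + mm*j"
    unfolding mm_eq by (rule arith1[OF q2]) (unfold c_def j_def, rule mult_div_mod_eq[symmetric])
  moreover have "\<alpha>^(c + mm*j) = \<alpha>^c" by (simp only: power_add power_mult alpha_m power_one mult_1 mult_1_right)
  ultimately have "\<alpha>^c \<in> L" by simp
  hence "\<alpha>^(c + nn*(b div nn)) \<in> L" by (rule L_shift)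
  moreover have "c + nn*(b div nn) = b" unfolding c_def using assms(2) mod_mult_div_eq[of b nn] by simp
  ultimately show ?thesis by simp
qed

definition "E = {k. k < mm \<and> \<alpha>^k \<in> L}"

lemma E_sub: "E \<subseteq> {..<mm}" unfolding E_def by auto

lemma card_E: "card E = q^2 - 1"
proof -
  have "(\<lambda>k. \<alpha>^k) ` E = L - {0}"
  proof (rule equalityI; rule subsetI)
    fix x assume "x \<in> (\<lambda>k. \<alpha>^k) ` E" thus "x \<in> L - {0}" using alpha_nz by (auto simp: E_def)
  next
    fix x assume x: "x \<in> L - {0}"
    then obtain k where "k < mm" "\<alpha>^k = x" using alpha_surj by blast
    thus "x \<in> (\<lambda>k. \<alpha>^k) ` E" using x by (auto simp: E_def)
  qed
  moreover have "inj_on (\<lambda>k. \<alpha>^k) E" by (rule inj_on_subset[OF alpha_inj]) (use E_sub in auto)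
  ultimately have "card E = card (L - {0})" by (rule card_bij_img)
  also have "\<dots> = q^2 - 1" using L0 card_L by (simp add: card_Diff_singleton)
  finally show ?thesis .
qed

lemma shift_bound:
  assumes "d < mm"
  shows "q - 1 \<le> card {y\<in>E. (y+d) mod mm \<in> E}"
proof -
  define h where "h = \<alpha>^d"
  have h0: "h \<noteq> 0" unfolding h_def using alpha_nz by simp
  define M where "M = {x. h*x \<in> L}"
  have "(\<lambda>x. h*x) ` M = L"
  proof (rule equalityI; rule subsetI)
    fix y assume "y \<in> L"
    hence "y/h \<in> M" using h0 by (simp add: M_def)
    moreover have "y = h*(y/h)" using h0 by simp
    ultimately show "y \<in> (\<lambda>x. h*x) ` M" by blast
  qed (auto simp: M_def)
  moreover have "inj_on (\<lambda>x. h*x) M" using h0 by (auto simp: inj_on_def)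
  ultimately have "card M = card L" by (rule card_bij_img)
  hence cM: "card M = q^2" using card_L by simp
  have Msub: "\<forall>x\<in>M. \<forall>y\<in>M. x - y \<in> M" using L_sub by (simp add: M_def right_diff_distrib)
  have "card L * card M \<le> card (L \<inter> M) * card (UNIV::'a set)"
    using card_inter_bound[of L M] L_sub Msub by blast
  moreover have "q^3*q = card L * card M" using cM card_L by (simp add: power2_eq_square power3_eq_cube)
  ultimately have "q^3 * q \<le> q^3 * card (L \<inter> M)" using card by (simp add: mult.commute)
  moreover have "q^3 > 0" using q2 by simp
  ultimately have qle: "q \<le> card (L \<inter> M)" by simp
  have "(\<lambda>k. \<alpha>^k) ` {y\<in>E. (y+d) mod mm \<in> E} = (L \<inter> M) - {0}"
  proof (rule equalityI; rule subsetI)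
    fix x assume "x \<in> (\<lambda>k. \<alpha>^k) ` {y\<in>E. (y+d) mod mm \<in> E}"
    then obtain y where y: "y \<in> E" "(y+d) mod mm \<in> E" "x = \<alpha>^y" by auto
    have "h * x = \<alpha>^(y+d)" using y(3) by (simp add: h_def power_add mult.commute)
    also have "\<dots> = \<alpha>^((y+d) mod mm)" by (rule alpha_pow_mod)
    finally have "h * x = \<alpha>^((y+d) mod mm)" .
    thus "x \<in> (L \<inter> M) - {0}" using y alpha_nz by (auto simp: E_def M_def)
  next
    fix x assume x: "x \<in> (L \<inter> M) - {0}"
    then obtain y where yk: "y < mm" "\<alpha>^y = x" using alpha_surj by blast
    have "h * x = \<alpha>^(y+d)" using yk(2) by (simp add: h_def power_add mult.commute)
    also have "\<dots> = \<alpha>^((y+d) mod mm)" by (rule alpha_pow_mod)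
    finally have "h * x = \<alpha>^((y+d) mod mm)" .
    moreover have hxL: "h*x \<in> L" using x by (simp add: M_def)
    moreover have "(y+d) mod mm < mm" using mm_pos by simp
    ultimately have e2: "(y+d) mod mm \<in> E" unfolding E_def by simp
    have e1: "y \<in> E" using x yk unfolding E_def by simp
    show "x \<in> (\<lambda>k. \<alpha>^k) ` {y\<in>E. (y+d) mod mm \<in> E}" using yk e1 e2 by (intro image_eqI[where x=y]) simp_all
  qed
  moreover have "inj_on (\<lambda>k. \<alpha>^k) {y\<in>E. (y+d) mod mm \<in> E}"
    by (rule inj_on_subset[OF alpha_inj]) (use E_sub in auto)
  ultimately have "card {y\<in>E. (y+d) mod mm \<in> E} = card ((L \<inter> M) - {0})" by (rule card_bij_img)
  also have "\<dots> = card (L \<inter> M) - 1" using L0 by (simp add: card_Diff_singleton M_def)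
  finally show ?thesis using qle by simp
qed

end



lemma ar_q2: "q \<ge> 1 \<Longrightarrow> (q::nat)^2 - 1 = (q-1)*(q+1)"
  by (cases q) (auto simp: power2_eq_square algebra_simps)

lemma ar_main: fixes q nn :: nat assumes "q \<ge> 2" "nn = q^2+q+1"
  shows "(q^2-1)^2 = (q-1)*(q^2-1) + ((q-1)*nn - (q-1))*(q-1)"
proof -
  obtain a where a: "q = a + 1" using assms by (metis add.commute le_add_diff_inverse2 le_trans one_le_numeral)
  have "(q-1)*nn - (q-1) = a*(a+1)*(a+2)" using a assms(2) by (simp add: power2_eq_square algebra_simps)
  moreover have "q^2 - 1 = a*(a+2)" using a by (simp add: power2_eq_square algebra_simps)
  ultimately show ?thesis using a by (simp add: power2_eq_square algebra_simps)
qed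

lemma dvd_add_mod: "(n::nat) dvd k \<Longrightarrow> (j + k) mod n = j mod n"
  by (auto elim!: dvdE)

context singer_line
begin

lemma nn_dvd_mm: "nn dvd mm" unfolding mm_eq by (rule dvd_triv_right)
lemma nn_pos: "nn > 0" by simp

lemma pg_sub: "pg_point q \<alpha> i \<subseteq> L \<longleftrightarrow> \<alpha>^i \<in> L"
proof
  assume "pg_point q \<alpha> i \<subseteq> L"
  moreover have "\<alpha>^i \<in> pg_point q \<alpha> i" unfolding pg_point_def using one_Fq by force
  ultimately show "\<alpha>^i \<in> L" by blast
next
  assume "\<alpha>^i \<in> L" thus "pg_point q \<alpha> i \<subseteq> L" unfolding pg_point_def using L_scale by auto
qed

lemma pg_inj: assumes "i < nn" "j < nn" "pg_point q \<alpha> i = pg_point q \<alpha> j" shows "i = j"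
proof -
  have "\<alpha>^i \<in> pg_point q \<alpha> i" unfolding pg_point_def using one_Fq by force
  hence "\<alpha>^i \<in> pg_point q \<alpha> j" using assms(3) by simp
  then obtain c where c: "c \<in> Fq q" "\<alpha>^i = c * \<alpha>^j" unfolding pg_point_def by blast
  have "c \<noteq> 0" using c alpha_nz by auto
  then obtain k where k: "c = \<alpha>^k" using prim unfolding primitive_elem_def by blast
  have nk: "nn dvd k" using c(1) k Fq_alpha by simp
  have "\<alpha>^i = \<alpha>^(k+j)" using c k by (simp add: power_add)
  hence "i mod mm = (k+j) mod mm" using alpha_eq by blast
  hence "i mod mm mod nn = (k+j) mod mm mod nn" by simp
  hence "i mod nn = (k+j) mod nn" using nn_dvd_mm by (simp only: mod_mod_cancel)
  also have "(k+j) mod nn = j mod nn" using dvd_add_mod[OF nk, of j] by (simp only: add.commute)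
  finally show ?thesis using assms(1,2) by simp
qed

definition "D = {i. i < nn \<and> \<alpha>^i \<in> L}"

lemma D_sub: "D \<subseteq> {..<nn}" unfolding D_def by auto

lemma E_char: "E = {k. k < (q-1)*nn \<and> k mod nn \<in> D}"
proof -
  have "k \<in> E \<longleftrightarrow> k < (q-1)*nn \<and> k mod nn \<in> D" for k
  proof -
    have "\<alpha>^k \<in> L \<longleftrightarrow> \<alpha>^(k mod nn) \<in> L" using L_alpha_mod[of k "k mod nn"] L_alpha_mod[of "k mod nn" k] by auto
    moreover have "k mod nn < nn" using nn_pos by (rule mod_less_divisor)
    ultimately show ?thesis unfolding E_def D_def mm_eq by auto
  qed
  thus ?thesis by auto
qed

lemma card_D: "card D = q + 1"
proof -
  have "card E = (q-1) * card D" unfolding E_char by (rule mod_count[OF D_sub])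
  moreover have "q^2 - 1 = (q-1)*(q+1)" by (rule ar_q2) (use q2 in simp)
  ultimately have "(q-1) * card D = (q-1)*(q+1)" using card_E by simp
  moreover have "q - 1 \<noteq> 0" using q2 by simp
  ultimately show ?thesis by (metis mult_left_cancel)
qed

lemma Eu_char: assumes "t dvd nn"
  shows "{k\<in>E. k mod t = u} = {k. k < (q-1)*nn \<and> k mod nn \<in> {i\<in>D. i mod t = u}}"
  unfolding E_char using mod_mod_cancel[OF assms] by auto

lemma card_Eu: assumes "t dvd nn"
  shows "card {k\<in>E. k mod t = u} = (q-1) * card {i\<in>D. i mod t = u}"
  unfolding Eu_char[OF assms] by (rule mod_count) (use D_sub in auto)

abbreviation "g d \<equiv> card {y\<in>E. (y+d) mod mm \<in> E}"

lemma g_dvd: assumes "d < mm" "nn dvd d" shows "g d = q^2 - 1"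
proof -
  have "{y\<in>E. (y+d) mod mm \<in> E} = E"
  proof (rule equalityI; rule subsetI)
    fix y assume y: "y \<in> E"
    have "(y+d) mod mm mod nn = (y+d) mod nn" using nn_dvd_mm by (simp only: mod_mod_cancel)
    also have "\<dots> = y mod nn" using assms(2) by (rule dvd_add_mod)
    finally have "(y+d) mod mm mod nn = y mod nn" .
    moreover have "(y+d) mod mm < mm" using mm_pos by (rule mod_less_divisor)
    ultimately show "y \<in> {y\<in>E. (y+d) mod mm \<in> E}" using y L_alpha_mod[of y "(y+d) mod mm"] unfolding E_def by auto
  qed auto
  thus ?thesis using card_E by simp
qed

lemma g_sum: "(\<Sum>d<mm. g d) = (q^2-1)^2"
proof -
  have "(\<Sum>d\<in>{..<mm}. g d) = card {(x,y). x\<in>E \<and> y\<in>E \<and> (x+mm-y) mod mm \<in> {..<mm}}"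
    by (rule diff_sum[OF E_sub]) simp
  also have "{(x,y). x\<in>E \<and> y\<in>E \<and> (x+mm-y) mod mm \<in> {..<mm}} = E \<times> E" using mm_pos by auto
  finally show ?thesis using card_E by (simp add: card_cartesian_product power2_eq_square)
qed

lemma g_val: assumes "d < mm" "\<not> nn dvd d" shows "g d = q - 1"
proof -
  define N1 where "N1 = {d. d < mm \<and> nn dvd d}"
  define N2 where "N2 = {d. d < mm \<and> \<not> nn dvd d}"
  have U: "{..<mm} = N1 \<union> N2" "N1 \<inter> N2 = {}" unfolding N1_def N2_def by auto
  have fin: "finite N1" "finite N2" unfolding N1_def N2_def by auto
  have cN1: "card N1 = q - 1" unfolding N1_def mm_eq by (rule card_multiples) simp
  have "card (N1 \<union> N2) = mm" using U(1) by (metis card_lessThan)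
  hence "card N1 + card N2 = mm" using card_Un_disjoint[OF fin U(2)] by simp
  hence cN2: "card N2 = (q-1)*nn - (q-1)" using cN1 mm_eq by simp
  have s1: "(\<Sum>d\<in>N1. g d) = (q-1)*(q^2-1)" using cN1 g_dvd unfolding N1_def by simp
  have "(\<Sum>d<mm. g d) = (\<Sum>d\<in>N1. g d) + (\<Sum>d\<in>N2. g d)" unfolding U(1) by (rule sum.union_disjoint[OF fin U(2)])
  hence "(\<Sum>d\<in>N2. g d) = (q^2-1)^2 - (q-1)*(q^2-1)" using s1 g_sum by linarith
  also have "\<dots> = ((q-1)*nn - (q-1))*(q-1)" using ar_main[OF q2 refl] by simp
  finally have le: "(\<Sum>d\<in>N2. g d) \<le> card N2 * (q-1)" using cN2 by simp
  have bd: "\<forall>x\<in>N2. q - 1 \<le> g x" using shift_bound unfolding N2_def by simp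
  have dN: "d \<in> N2" using assms unfolding N2_def by simp
  show ?thesis by (rule all_eq_from_sum[OF fin(2) bd le dN])
qed

end



lemma ar3: fixes q r X :: nat assumes "q \<ge> 2" "r \<ge> 1"
  "(q-1)^2*X = (q-1)*(q^2-1) + ((q-1)*r - (q-1))*(q-1)"
  shows "X = q + r"
proof -
  obtain a where a: "q = a + 1" using assms(1) by (metis add.commute le_add_diff_inverse2 le_trans one_le_numeral)
  obtain b where b: "r = b + 1" using assms(2) by (metis add.commute le_add_diff_inverse2)
  have "(q-1)*(q^2-1) + ((q-1)*r - (q-1))*(q-1) = (q-1)^2*(q+r)"
    using a b by (simp add: power2_eq_square algebra_simps)
  hence "(q-1)^2*X = (q-1)^2*(q+r)" using assms(3) by simp
  moreover have "(q-1)^2 \<noteq> 0" using assms(1) by simp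
  ultimately show ?thesis by (metis mult_left_cancel)
qed

lemma mod_diff_dvd:
  fixes t m x y :: nat assumes "t dvd m" "y < m"
  shows "(x mod t = y mod t) \<longleftrightarrow> t dvd (x+m-y) mod m"
proof -
  have "t dvd (x+m-y) mod m \<longleftrightarrow> t dvd (x+m-y)"
    using assms(1) by (metis dvd_mod_iff)
  also have "\<dots> \<longleftrightarrow> (x+m) mod t = y mod t" using assms(2) by (intro mod_eq_dvd_iff_nat[symmetric]) simp
  also have "(x+m) mod t = x mod t" using assms(1) by (rule dvd_add_mod)
  finally show ?thesis by simp
qed

context singer_line
begin

lemma sq_main: assumes "t dvd nn" "t > 0"
  shows "(\<Sum>u<t. card {i\<in>D. i mod t = u}^2) = q + nn div t"
proof -
  define r where "r = nn div t"
  have nn_r: "nn = t * r" using assms(1) unfolding r_def by simp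
  have r1: "r \<ge> 1"
  proof (rule ccontr)
    assume "\<not> 1 \<le> r" hence "r = 0" by simp
    hence "nn = 0" using nn_r by simp
    thus False by simp
  qed
  have tm: "t dvd mm" using assms(1) nn_dvd_mm by (rule dvd_trans)
  define X where "X = (\<Sum>u<t. card {i\<in>D. i mod t = u}^2)"
  define St where "St = {d. d < mm \<and> t dvd d}"
  define N1 where "N1 = {d. d < mm \<and> nn dvd d}"
  have "(q-1)^2 * X = (\<Sum>u<t. ((q-1) * card {i\<in>D. i mod t = u})^2)"
    unfolding X_def sum_distrib_left by (simp add: power_mult_distrib)
  also have "\<dots> = (\<Sum>u<t. card {k\<in>E. k mod t = u}^2)"
    using card_Eu[OF assms(1)] by simp
  also have "\<dots> = card {(x,y). x\<in>E \<and> y\<in>E \<and> x mod t = y mod t}"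
    by (rule pair_sq[of E "{..<t}" "\<lambda>x. x mod t", symmetric]) (use assms(2) finite_subset[OF E_sub] in auto)
  also have "{(x,y). x\<in>E \<and> y\<in>E \<and> x mod t = y mod t} = {(x,y). x\<in>E \<and> y\<in>E \<and> (x+mm-y) mod mm \<in> St}"
  proof -
    have "x mod t = y mod t \<longleftrightarrow> (x+mm-y) mod mm \<in> St" if "y \<in> E" for x y
    proof -
      have "y < mm" using that E_sub by auto
      moreover have "(x+mm-y) mod mm < mm" using mm_pos by (rule mod_less_divisor)
      ultimately show ?thesis using mod_diff_dvd[OF tm, of y x] unfolding St_def by auto
    qed
    thus ?thesis by blast
  qed
  also have "card {(x,y). x\<in>E \<and> y\<in>E \<and> (x+mm-y) mod mm \<in> St} = (\<Sum>d\<in>St. g d)"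
    by (rule diff_sum[symmetric, OF E_sub]) (auto simp: St_def)
  also have "\<dots> = (\<Sum>d\<in>St - N1. g d) + (\<Sum>d\<in>N1. g d)"
  proof (rule sum.subset_diff)
    show "N1 \<subseteq> St" unfolding N1_def St_def using assms(1) dvd_trans by blast
  qed (simp add: St_def)
  also have "(\<Sum>d\<in>N1. g d) = (q-1)*(q^2-1)"
  proof -
    have "card N1 = q - 1" unfolding N1_def mm_eq by (rule card_multiples) simp
    thus ?thesis using g_dvd unfolding N1_def by simp
  qed
  also have "(\<Sum>d\<in>St - N1. g d) = card (St - N1) * (q-1)"
    using g_val unfolding St_def N1_def by simp
  also have "card (St - N1) = (q-1)*r - (q-1)"
  proof -
    have "N1 \<subseteq> St" unfolding N1_def St_def using assms(1) dvd_trans by blast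
    moreover have "card St = (q-1)*r"
    proof -
      have "mm = ((q-1)*r)*t" unfolding mm_eq nn_r by (simp add: algebra_simps)
      hence "St = {d. d < ((q-1)*r)*t \<and> t dvd d}" unfolding St_def by simp
      thus ?thesis using card_multiples[OF assms(2)] by simp
    qed
    moreover have "card N1 = q - 1" unfolding N1_def mm_eq by (rule card_multiples) simp
    ultimately show ?thesis by (simp add: card_Diff_subset N1_def)
  qed
  finally have "(q-1)^2*X = (q-1)*(q^2-1) + ((q-1)*r - (q-1))*(q-1)" by simp
  hence "X = q + r" using ar3[OF q2 r1] by simp
  thus ?thesis unfolding X_def r_def .
qed

end



lemma orbit_sum:
  fixes p t :: nat and w :: "nat \<Rightarrow> nat" and R :: "nat set" and F :: "nat \<Rightarrow> real"
  assumes tp: "prime t" and ntp: "\<not> t dvd p"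
    and inv: "\<forall>u<t. w u \<le> w ((p*u) mod t)"
    and R: "R \<subseteq> {1..<t}" and Rc: "\<And>i. i\<in>{1..<t} \<Longrightarrow> card (R \<inter> mult_orbit p t i) = 1"
  shows "real (t-1) / real (s_pt p t) * (\<Sum>i\<in>R. F (w i)) = (\<Sum>u\<in>{1..<t}. F (w u))"
proof -
  let ?O = "mult_orbit p t"
  have t2: "t \<ge> 2" using tp by (simp add: prime_ge_2_nat)
  have t0: "t > 0" using t2 by simp
  have mem: "x \<in> ?O i \<longleftrightarrow> (\<exists>k. x = (p^k*i) mod t)" for x i unfolding mult_orbit_def by auto
  have o1: "i \<in> ?O i" if "i < t" for i
  proof -
    have "i = (p^0*i) mod t" using that by simp
    thus ?thesis using mem[of i i] by blast
  qed
  have o2: "?O i \<subseteq> {1..<t}" if "i \<in> {1..<t}" for i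
  proof
    fix x assume "x \<in> ?O i"
    then obtain k where k: "x = (p^k*i) mod t" using mem[of x i] by blast
    have "\<not> t dvd p^k*i"
    proof
      assume "t dvd p^k*i"
      hence "t dvd p^k \<or> t dvd i" using tp by (simp add: prime_dvd_mult_iff)
      moreover have "\<not> t dvd p^k" using tp ntp prime_dvd_power by blast
      moreover have "\<not> t dvd i" using that by (auto dest: dvd_imp_le)
      ultimately show False by blast
    qed
    hence "x \<noteq> 0" using k by (simp add: dvd_eq_mod_eq_0)
    moreover have "x < t" using k t0 by simp
    ultimately show "x \<in> {1..<t}" by simp
  qed
  have o3: "?O x \<subseteq> ?O i" if xi: "x \<in> ?O i" for x i
  proof
    fix y assume "y \<in> ?O x"
    then obtain j where j: "y = (p^j*x) mod t" using mem[of y x] by blast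
    obtain k where k: "x = (p^k*i) mod t" using xi mem[of x i] by blast
    have "y = (p^j*(p^k*i)) mod t" unfolding j k by (simp add: mod_mult_right_eq)
    also have "\<dots> = (p^(j+k)*i) mod t" by (simp add: power_add mult.assoc)
    finally show "y \<in> ?O i" using mem[of y i] by blast
  qed
  have ferm: "[p^(t-1) = 1] (mod t)" using fermat_theorem[OF tp ntp] .
  have o4: "i \<in> ?O x" if it: "i < t" and xi: "x \<in> ?O i" for x i
  proof -
    obtain k where k: "x = (p^k*i) mod t" using xi mem[of x i] by blast
    have "[(p^(t-1))^k = 1^k] (mod t)" using ferm by (rule cong_pow)
    hence "[p^(k*(t-2)) * p^k = 1] (mod t)"
    proof -
      have "k*(t-2) + k = (t-1)*k" using t2 by (simp add: algebra_simps)
      thus "[(p^(t-1))^k = 1^k] (mod t) \<Longrightarrow> [p^(k*(t-2)) * p^k = 1] (mod t)"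
        by (simp add: power_add[symmetric] power_mult[symmetric])
    qed
    hence "[p^(k*(t-2)) * p^k * i = 1 * i] (mod t)" by (rule cong_scalar_right)
    hence "(p^(k*(t-2)) * (p^k * i)) mod t = i" using it by (simp add: cong_def mult.assoc)
    hence "(p^(k*(t-2)) * x) mod t = i" unfolding k by (simp add: mod_mult_right_eq)
    thus ?thesis using mem[of i x] by blast
  qed
  have o5: "w i \<le> w ((p^k*i) mod t)" if "i < t" for i k
  proof (induction k)
    case 0 thus ?case using that by simp
  next
    case (Suc k)
    have "(p^k*i) mod t < t" using t0 by simp
    hence "w ((p^k*i) mod t) \<le> w ((p*((p^k*i) mod t)) mod t)" using inv by blast
    also have "(p*((p^k*i) mod t)) mod t = (p^(Suc k)*i) mod t" by (simp add: mod_mult_right_eq mult.assoc)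
    finally show ?case using Suc.IH by simp
  qed
  have o6: "w x = w i" if it: "i < t" and xi: "x \<in> ?O i" for x i
  proof -
    obtain k where k: "x = (p^k*i) mod t" using xi mem[of x i] by blast
    have "w i \<le> w x" using o5[OF it] k by simp
    moreover have xt: "x < t" using k t0 by simp
    moreover have "i \<in> ?O x" by (rule o4[OF it xi])
    then obtain j where "i = (p^j*x) mod t" using mem[of i x] by blast
    hence "w x \<le> w i" using o5[OF xt, of j] by simp
    ultimately show ?thesis by simp
  qed
  define k0 where "k0 = card (?O 1)"
  have o7: "card (?O i) = k0" if "i \<in> {1..<t}" for i
  proof -
    have "(\<lambda>x. (x*i) mod t) ` ?O 1 = ?O i"
    proof (rule equalityI; rule subsetI)
      fix y assume "y \<in> (\<lambda>x. (x*i) mod t) ` ?O 1"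
      then obtain x k where "y = (x*i) mod t" "x = (p^k*1) mod t" using mem[of _ 1] by blast
      hence "y = (p^k*i) mod t" by (simp add: mod_mult_left_eq)
      thus "y \<in> ?O i" using mem[of y i] by blast
    next
      fix y assume "y \<in> ?O i"
      then obtain k where k: "y = (p^k*i) mod t" using mem[of y i] by blast
      have "(p^k*1) mod t \<in> ?O 1" using mem[of "(p^k*1) mod t" 1] by blast
      moreover have "y = (((p^k*1) mod t)*i) mod t" using k by (simp add: mod_mult_left_eq)
      ultimately show "y \<in> (\<lambda>x. (x*i) mod t) ` ?O 1" by blast
    qed
    moreover have "inj_on (\<lambda>x. (x*i) mod t) (?O 1)"
    proof (rule inj_onI)
      fix x y assume xy: "x \<in> ?O 1" "y \<in> ?O 1" "(x*i) mod t = (y*i) mod t"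
      have "coprime i t"
      proof -
        have "\<not> t dvd i" using that by (auto dest: dvd_imp_le)
        hence "coprime t i" by (rule prime_imp_coprime[OF tp])
        thus ?thesis by (simp add: coprime_commute)
      qed
      moreover have "[x*i = y*i] (mod t)" using xy(3) by (simp add: cong_def)
      ultimately have "[x = y] (mod t)" by (simp add: cong_mult_rcancel_nat)
      moreover have "x < t" "y < t" using xy(1,2) mem[of x 1] mem[of y 1] t0 by auto
      ultimately show "x = y" by (simp add: cong_def)
    qed
    ultimately show ?thesis unfolding k0_def by (metis card_image)
  qed
  have rep: "\<exists>r. R \<inter> ?O u = {r}" if "u \<in> {1..<t}" for u
    using Rc[OF that] by (simp add: card_1_singleton_iff)
  have fib: "{u\<in>{1..<t}. r \<in> ?O u} = ?O r" if "r \<in> R" for r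
  proof (rule equalityI; rule subsetI)
    fix u assume "u \<in> {u\<in>{1..<t}. r \<in> ?O u}"
    thus "u \<in> ?O r" using o4 by auto
  next
    fix u assume u: "u \<in> ?O r"
    have rt: "r \<in> {1..<t}" using that R by auto
    hence "u \<in> {1..<t}" using o2 u by blast
    moreover have "r \<in> ?O u" using o4[of r u] rt u by auto
    ultimately show "u \<in> {u\<in>{1..<t}. r \<in> ?O u}" by simp
  qed
  have main: "(\<Sum>u\<in>{1..<t}. G (w u)) = real k0 * (\<Sum>r\<in>R. G (w r))" for G :: "nat \<Rightarrow> real"
  proof -
    have "(\<Sum>u\<in>{1..<t}. G (w u)) = (\<Sum>u\<in>{1..<t}. \<Sum>r\<in>R. if r \<in> ?O u then G (w r) else 0)"
    proof (rule sum.cong[OF refl])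
      fix u assume u: "u \<in> {1..<t}"
      obtain r0 where r0: "R \<inter> ?O u = {r0}" using rep[OF u] by blast
      have "(\<Sum>r\<in>R. if r \<in> ?O u then G (w r) else 0) = (\<Sum>r\<in>{r\<in>R. r \<in> ?O u}. G (w r))"
        using R by (simp add: sum.inter_filter finite_subset)
      also have "{r\<in>R. r \<in> ?O u} = {r0}" using r0 by auto
      finally have e: "(\<Sum>r\<in>R. if r \<in> ?O u then G (w r) else 0) = G (w r0)" by simp
      have "w r0 = w u" using o6[of u r0] r0 u by auto
      thus "G (w u) = (\<Sum>r\<in>R. if r \<in> ?O u then G (w r) else 0)" using e by simp
    qed
    also have "\<dots> = (\<Sum>r\<in>R. \<Sum>u\<in>{1..<t}. if r \<in> ?O u then G (w r) else 0)" by (rule sum.swap)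
    also have "\<dots> = (\<Sum>r\<in>R. real k0 * G (w r))"
    proof (rule sum.cong[OF refl])
      fix r assume r: "r \<in> R"
      have "(\<Sum>u\<in>{1..<t}. if r \<in> ?O u then G (w r) else 0) = (\<Sum>u\<in>{u\<in>{1..<t}. r \<in> ?O u}. G (w r))"
        by (rule sum.inter_filter[symmetric]) simp
      also have "\<dots> = real (card (?O r)) * G (w r)" unfolding fib[OF r] by simp
      also have "card (?O r) = k0" using o7 r R by auto
      finally show "(\<Sum>u\<in>{1..<t}. if r \<in> ?O u then G (w r) else 0) = real k0 * G (w r)" .
    qed
    finally show ?thesis by (simp add: sum_distrib_left)
  qed
  have "real (t-1) = real k0 * real (card R)" using main[of "\<lambda>_. 1"] by simp
  hence tk: "t - 1 = k0 * card R" by (metis of_nat_eq_iff of_nat_mult)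
  have "s_pt p t = card R"
  proof -
    have "?O ` {1..<t} = ?O ` R"
    proof (rule equalityI; rule subsetI)
      fix B assume "B \<in> ?O ` {1..<t}"
      then obtain u where u: "u \<in> {1..<t}" "B = ?O u" by blast
      obtain r where r: "R \<inter> ?O u = {r}" using rep[OF u(1)] by blast
      have "r \<in> ?O u" "r \<in> R" using r by auto
      hence "?O r \<subseteq> ?O u" using o3 by blast
      moreover have "u \<in> ?O r" using o4[of u r] u \<open>r \<in> ?O u\<close> by auto
      hence "?O u \<subseteq> ?O r" using o3 by blast
      ultimately show "B \<in> ?O ` R" using u \<open>r \<in> R\<close> by blast
    qed (use R in auto)
    moreover have "inj_on ?O R"
    proof (rule inj_onI)
      fix r r' assume rr: "r \<in> R" "r' \<in> R" "?O r = ?O r'"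
      have rt: "r \<in> {1..<t}" "r' \<in> {1..<t}" using rr R by auto
      have "r \<in> R \<inter> ?O r" "r' \<in> R \<inter> ?O r" using rr o1 rt by auto
      moreover obtain z where "R \<inter> ?O r = {z}" using rep[OF rt(1)] by blast
      ultimately show "r = r'" by auto
    qed
    ultimately show ?thesis unfolding s_pt_def by (simp add: card_image)
  qed
  moreover have "card R > 0" using tk t2 by (cases "card R") auto
  ultimately show ?thesis using main[of F] tk by (simp add: of_nat_diff)
qed




lemma card_fibers:
  fixes D :: "nat set"
  assumes "finite D" "t > 0"
  shows "card D = (\<Sum>u<t. card {i\<in>D. i mod t = u})"
proof -
  have "D = (\<Union>u\<in>{..<t}. {i\<in>D. i mod t = u})" using assms(2) by auto
  moreover have "card (\<Union>u\<in>{..<t}. {i\<in>D. i mod t = u}) = (\<Sum>u<t. card {i\<in>D. i mod t = u})"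
    by (rule card_UN_disjoint) (use assms in auto)
  ultimately show ?thesis by simp
qed

theorem corollary2:
  fixes \<alpha> :: "'a::{field,finite}" and p h q t :: nat and L :: "'a set"
    and w :: "nat \<Rightarrow> nat" and R :: "nat set"
  assumes "prime p" and "h \<ge> 1" and "q = p ^ h"
    and "card (UNIV :: 'a set) = q ^ 3"
    and "primitive_elem \<alpha>"
    and "pg_line q L" and "tau_fixed p q \<alpha> L"
    and "t dvd q^2 + q + 1" and "prime t"
    and "\<And>u. w u = card (line_points q \<alpha> L \<inter> orbit_O q \<alpha> t u)"
    and "R \<subseteq> {1..<t}"
    and "\<And>i. i \<in> {1..<t} \<Longrightarrow> card (R \<inter> mult_orbit p t i) = 1"
  shows "real (w 0) + real (t - 1) / real (s_pt p t) * (\<Sum>i\<in>R. real (w i)) = real q + 1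
       \<and> real (w 0) ^ 2 + real (t - 1) / real (s_pt p t) * (\<Sum>i\<in>R. real (w i) ^ 2)
           = (real q ^ 2 + (real t + 1) * real q + 1) / real t"
proof -
  note pp = assms(1) and tp = assms(9) and tn = assms(8)
  have p2: "p \<ge> 2" using pp by (simp add: prime_ge_2_nat)
  have pq: "p dvd q" using assms(2,3) by (simp add: dvd_power)
  have "p^1 \<le> p^h" using assms(2) p2 by (intro power_increasing) simp_all
  hence "p \<le> q" using assms(3) by simp
  hence q2: "q \<ge> 2" using p2 by simp
  interpret S: singer_line \<alpha> q L
    by unfold_locales (use q2 assms(4,5,6) in auto)
  let ?n = "q^2+q+1"
  have t0: "t > 0" using tp by (simp add: prime_gt_0_nat)
  have npn: "\<not> p dvd ?n"
  proof
    assume "p dvd ?n"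
    moreover have "p dvd q^2 + q" using pq by (metis dvd_add dvd_mult2 power2_eq_square)
    ultimately have "p dvd 1" using dvd_add_right_iff[of p "q^2+q" 1] by blast
    thus False using p2 by simp
  qed
  have ntp: "\<not> t dvd p"
  proof
    assume "t dvd p"
    hence "t = p" using primes_dvd_imp_eq tp pp by blast
    thus False using npn tn by simp
  qed
  have cpn: "coprime p ?n" by (rule prime_imp_coprime[OF pp npn])
  define Du where "Du u = {i\<in>S.D. i mod t = u}" for u
  have Du_sub: "Du u \<subseteq> {..<?n}" for u using S.D_sub unfolding Du_def by auto
  have wD: "w u = card (Du u)" for u
  proof -
    have "line_points q \<alpha> L \<inter> orbit_O q \<alpha> t u = pg_point q \<alpha> ` Du u"
    proof (rule equalityI; rule subsetI)
      fix P assume "P \<in> line_points q \<alpha> L \<inter> orbit_O q \<alpha> t u"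
      then obtain i j where ij: "P = pg_point q \<alpha> i" "i < ?n" "pg_point q \<alpha> i \<subseteq> L"
          "P = pg_point q \<alpha> j" "j < ?n" "j mod t = u"
        unfolding line_points_def orbit_O_def by blast
      have "i = j" using S.pg_inj[OF ij(2) ij(5)] ij by simp
      thus "P \<in> pg_point q \<alpha> ` Du u" using ij S.pg_sub unfolding Du_def S.D_def by auto
    next
      fix P assume "P \<in> pg_point q \<alpha> ` Du u"
      then obtain i where i: "P = pg_point q \<alpha> i" "i < ?n" "\<alpha>^i \<in> L" "i mod t = u"
        unfolding Du_def S.D_def by blast
      thus "P \<in> line_points q \<alpha> L \<inter> orbit_O q \<alpha> t u"
        using S.pg_sub unfolding line_points_def orbit_O_def by blast
    qed
    moreover have "inj_on (pg_point q \<alpha>) (Du u)"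
      using S.pg_inj Du_sub by (simp add: inj_on_def subset_iff)
    ultimately show ?thesis using assms(10) by (simp add: card_image)
  qed
  have inv: "\<forall>u<t. w u \<le> w ((p*u) mod t)"
  proof (intro allI impI)
    fix u assume "u < t"
    define \<tau> where "\<tau> i = (i*p) mod ?n" for i
    have "\<tau> ` Du u \<subseteq> Du ((p*u) mod t)"
    proof
      fix x assume "x \<in> \<tau> ` Du u"
      then obtain i where i: "i \<in> Du u" "x = \<tau> i" by blast
      have il: "i < ?n" "\<alpha>^i \<in> L" "i mod t = u" using i(1) unfolding Du_def S.D_def by auto
      have "pg_point q \<alpha> ((i * p) mod ?n) \<subseteq> L"
        using assms(7) il S.pg_sub unfolding tau_fixed_def by blast
      hence "\<alpha>^x \<in> L" using S.pg_sub i(2) unfolding \<tau>_def by simp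
      moreover have "x < ?n" unfolding i(2) \<tau>_def by simp
      moreover have "x mod t = (p*u) mod t"
      proof -
        have "x mod t = (i*p) mod t" unfolding i(2) \<tau>_def using mod_mod_cancel[OF tn] by simp
        also have "\<dots> = ((i mod t)*p) mod t" by (simp add: mod_mult_left_eq)
        finally show ?thesis using il(3) by (simp add: mult.commute)
      qed
      ultimately show "x \<in> Du ((p*u) mod t)" unfolding Du_def S.D_def by simp
    qed
    moreover have "inj_on \<tau> (Du u)"
    proof (rule inj_onI)
      fix i j assume ij: "i \<in> Du u" "j \<in> Du u" "\<tau> i = \<tau> j"
      have "[i*p = j*p] (mod ?n)" using ij(3) unfolding \<tau>_def cong_def .
      hence "[i = j] (mod ?n)" using cpn by (simp add: cong_mult_rcancel_nat)
      moreover have "i < ?n" "j < ?n" using ij Du_sub by auto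
      ultimately show "i = j" by (simp add: cong_def)
    qed
    moreover have "finite (Du ((p*u) mod t))" using finite_subset[OF Du_sub] by simp
    ultimately have "card (Du u) \<le> card (Du ((p*u) mod t))"
      using card_inj_on_le by blast
    thus "w u \<le> w ((p*u) mod t)" using wD by simp
  qed
  have orb: "real (t-1) / real (s_pt p t) * (\<Sum>i\<in>R. F (w i)) = (\<Sum>u\<in>{1..<t}. F (w u))"
    for F :: "nat \<Rightarrow> real"
    by (rule orbit_sum[OF tp ntp inv assms(11) assms(12)])
  have split: "(\<Sum>u<t. F (w u)) = F (w 0) + (\<Sum>u\<in>{1..<t}. F (w u))" for F :: "nat \<Rightarrow> real"
    using t0 by (simp add: atLeast0LessThan[symmetric] sum.atLeast_Suc_lessThan)
  have finD: "finite S.D" using finite_subset[OF S.D_sub] by simp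
  have s1: "(\<Sum>u<t. w u) = q + 1"
    using card_fibers[OF finD t0] S.card_D wD unfolding Du_def by simp
  have s2: "(\<Sum>u<t. w u ^ 2) = q + ?n div t"
    using S.sq_main[OF tn t0] wD unfolding Du_def by simp
  have g1: "real (w 0) + real (t - 1) / real (s_pt p t) * (\<Sum>i\<in>R. real (w i)) = real q + 1"
  proof -
    have "real (w 0) + real (t - 1) / real (s_pt p t) * (\<Sum>i\<in>R. real (w i)) = (\<Sum>u<t. real (w u))"
      using orb[of real] split[of real] by simp
    also have "\<dots> = real (\<Sum>u<t. w u)" by simp
    finally show ?thesis using s1 by simp
  qed
  have g2: "real (w 0) ^ 2 + real (t - 1) / real (s_pt p t) * (\<Sum>i\<in>R. real (w i) ^ 2)
           = (real q ^ 2 + (real t + 1) * real q + 1) / real t"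
  proof -
    have "real (w 0) ^ 2 + real (t - 1) / real (s_pt p t) * (\<Sum>i\<in>R. real (w i) ^ 2) = (\<Sum>u<t. real (w u) ^ 2)"
      using orb[of "\<lambda>x. real x ^ 2"] split[of "\<lambda>x. real x ^ 2"] by simp
    also have "\<dots> = real (\<Sum>u<t. w u ^ 2)" by simp
    also have "\<dots> = real q + real (?n div t)" using s2 by simp
    also have "\<dots> = (real q ^ 2 + (real t + 1) * real q + 1) / real t"
    proof -
      obtain r where r: "?n = t * r" using tn by blast
      have "?n div t = r" using r t0 by simp
      moreover have "real q ^ 2 + real q + 1 = real t * real r" using r by (metis of_nat_1 of_nat_add of_nat_mult of_nat_power)
      ultimately show ?thesis using t0 by (simp add: field_simps)
    qed
    finally show ?thesis .
  qed
  show ?thesis using g1 g2 by blast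
qed



end
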